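(* Let $M=(I,O,T,t_0,\tau,\mathit{out})$ be a Moore system, let $\Phi$ be a CTL* state formula over inputs $I$ and outputs $O$, and let $A=(2^O,2^I,Q,q_0,\delta,\mathit{Acc})$ be an alternating hesitant tree automaton accepting exactly the computation trees satisfying $\Phi$. Then $M\models\Phi$ if and only if there exist functions $\mathit{rch}:Q\times T\to\{\mathit{true},\mathit{false}\}$ and $\rho:Q\times T\to\mathbb N$ satisfying $$\mathit{rch}(q_0,t_0)\wedge\bigwedge_{(q,t)\in Q\times T}\Big[\mathit{rch}(q,t)\rightarrow\delta(q,\mathit{out}(t))\big[(d,q')\mapsto \mathit{rch}(q',\tau(t,d))\wedge\rho(q,t)\triangleright_{q,q'}\rho(q',\tau(t,d))\big]\Big],$$ where the substitution replaces every atom $(d,q')$ of the positive Boolean formula $\delta(q,\mathit{out}(t))$ by the indicated conjunction, and $\triangleright_{q,q'}$ is: if $q,q'$ lie in the same set $Q^N_j$, the B\"uchi comparison ($\mathit{true}$ if $q\in\mathit{Acc}$, and $\rho(q,t)>\rho(q',\tau(t,d))$ otherwise); if $q,q'$ lie in the same set $Q^U_j$, the co-B\"uchi comparison ($\rho(q,t)>\rho(q',\tau(t,d))$ if $q\in\mathit{Acc}$, and $\rho(q,t)\ge\rho(q',\tau(t,d))$ otherwise); otherwise $\mathit{true}$.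
   Context: A Moore system has disjoint finite inputs $I$, outputs $O$, finite states $T$, initial state $t_0$, total transition function $\tau:T\times 2^I\to T$ and output function $\mathit{out}:T\to 2^O$; its computation tree has nodes $(2^I)^*$, node $w$ labelled $\mathit{out}(\tau(t_0,w))$, and $M\models\Phi$ means this tree satisfies $\Phi$ at the root. CTL* with inputs: state formulas are built from $\mathit{true},\mathit{false}$, outputs and negated outputs, $\wedge,\vee$, and $\mathsf A\varphi,\mathsf E\varphi$ for path formulas $\varphi$; path formulas are built from state formulas, inputs and negated inputs, $\wedge,\vee,\mathsf X,\mathsf U,\mathsf R$; on a tree path $n_1n_2\dots$ with $n_2=n_1\cdot e$, an input $i$ holds iff $i\in e$; otherwise semantics is standard. An alternating tree automaton $(2^O,2^I,Q,q_0,\delta,\mathit{acc})$ has $\delta:Q\times 2^O\to\mathcal B^+(2^I\times Q)$ (positive Boolean formulas, total with respect to directions); a run-tree on a computation tree labels the root with $(\epsilon,q_0)$ and, for a node labelled $(n,q)$, has children labelled $(n\cdot d_j,q_j)$ for a set $\{(d_j,q_j)\}$ satisfying $\delta(q,l(n))$; the automaton accepts if some run-tree has all branches accepting. It is hesitant if $Q$ is partitioned into sets $Q^N_1,\dots,Q^N_{k_N},Q^U_1,\dots,Q^U_{k_U}$ with a partial order on them such that for $q\in Q^N_j$ the atoms of $\delta(q,a)$ inside $Q^N_j$ are disjunctively related and all other atoms lie in lower sets, and dually for $q\in Q^U_j$ with conjunctively related atoms; a branch with state sequence $\pi$ is accepting iff either it eventually stays in some $Q^U_j$ and visits $\mathit{Acc}$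 finitely often, or eventually stays in some $Q^N_j$ and visits $\mathit{Acc}$ infinitely often. *)

theory Defs
  imports Main "HOL-Library.Disjoint_Sets"
begin

text \<open>Directions of the
computation tree are subsets of the inputs, labels are subsets of the outputs.\<close>

record ('a, 's) moore =
  m_inputs  :: "'a set"
  m_outputs :: "'a set"
  m_states  :: "'s set"
  m_init    :: 's
  m_trans   :: "'s \<Rightarrow> 'a set \<Rightarrow> 's"
  m_out     :: "'s \<Rightarrow> 'a set"

definition moore_system :: "('a, 's) moore \<Rightarrow> bool" where
  "moore_system M \<longleftrightarrow>
     finite (m_inputs M) \<and> finite (m_outputs M) \<and> m_inputs M \<inter> m_outputs M = {} \<and>
     finite (m_states M) \<and> m_init M \<in> m_states M \<and>
     (\<forall>t \<in> m_states M. \<forall>e. e \<subseteq> m_inputs M \<longrightarrow> m_trans M t e \<in> m_states M) \<and>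
     (\<forall>t \<in> m_states M. m_out M t \<subseteq> m_outputs M)"

definition m_run :: "('a, 's) moore \<Rightarrow> 's \<Rightarrow> 'a set list \<Rightarrow> 's" where
  "m_run M t w = foldl (m_trans M) t w"

text \<open>Trees are functions from nodes (lists of directions) to labels; only nodes in
 \<open>lists (Pow I)\<close> are relevant.\<close>
definition comp_tree :: "('a, 's) moore \<Rightarrow> 'a set list \<Rightarrow> 'a set" where
  "comp_tree M w = m_out M (m_run M (m_init M) w)"

datatype 'a sform =
    STrue | SFalse | SOut 'a | SNOut 'a
  | SAnd "'a sform" "'a sform" | SOr "'a sform" "'a sform"
  | SA "'a pform" | SE "'a pform"
and 'a pform =
    PState "'a sform" | PIn 'a | PNIn 'a
  | PAnd "'a pform" "'a pform" | POr "'a pform" "'a pform"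
  | PX "'a pform" | PU "'a pform" "'a pform" | PR "'a pform" "'a pform"

primrec wf_sform :: "'a set \<Rightarrow> 'a set \<Rightarrow> 'a sform \<Rightarrow> bool"
and wf_pform :: "'a set \<Rightarrow> 'a set \<Rightarrow> 'a pform \<Rightarrow> bool" where
  "wf_sform Ins Outs STrue = True"
| "wf_sform Ins Outs SFalse = True"
| "wf_sform Ins Outs (SOut o') = (o' \<in> Outs)"
| "wf_sform Ins Outs (SNOut o') = (o' \<in> Outs)"
| "wf_sform Ins Outs (SAnd f g) = (wf_sform Ins Outs f \<and> wf_sform Ins Outs g)"
| "wf_sform Ins Outs (SOr f g) = (wf_sform Ins Outs f \<and> wf_sform Ins Outs g)"
| "wf_sform Ins Outs (SA p) = wf_pform Ins Outs p"
| "wf_sform Ins Outs (SE p) = wf_pform Ins Outs p"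
| "wf_pform Ins Outs (PState f) = wf_sform Ins Outs f"
| "wf_pform Ins Outs (PIn i) = (i \<in> Ins)"
| "wf_pform Ins Outs (PNIn i) = (i \<in> Ins)"
| "wf_pform Ins Outs (PAnd p q) = (wf_pform Ins Outs p \<and> wf_pform Ins Outs q)"
| "wf_pform Ins Outs (POr p q) = (wf_pform Ins Outs p \<and> wf_pform Ins Outs q)"
| "wf_pform Ins Outs (PX p) = wf_pform Ins Outs p"
| "wf_pform Ins Outs (PU p q) = (wf_pform Ins Outs p \<and> wf_pform Ins Outs q)"
| "wf_pform Ins Outs (PR p q) = (wf_pform Ins Outs p \<and> wf_pform Ins Outs q)"

text \<open>A tree path from node \<open>n\<close> is given by its sequence of directions
 \<open>ds\<close> (with \<open>n\<^sub>1 = n\<close>, \<open>n\<^sub>{k+1} = n\<^sub>k \<cdot> ds k\<close>).\<close>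
definition path_node :: "'a set list \<Rightarrow> (nat \<Rightarrow> 'a set) \<Rightarrow> nat \<Rightarrow> 'a set list" where
  "path_node n ds k = n @ map ds [0..<k]"

definition path_shift :: "(nat \<Rightarrow> 'a set) \<Rightarrow> nat \<Rightarrow> nat \<Rightarrow> 'a set" where
  "path_shift ds k = (\<lambda>m. ds (m + k))"

primrec ssat :: "'a set \<Rightarrow> ('a set list \<Rightarrow> 'a set) \<Rightarrow> 'a set list \<Rightarrow> 'a sform \<Rightarrow> bool"
and psat :: "'a set \<Rightarrow> ('a set list \<Rightarrow> 'a set) \<Rightarrow> 'a set list \<Rightarrow> (nat \<Rightarrow> 'a set) \<Rightarrow> 'a pform \<Rightarrow> bool"
where
  "ssat I l n STrue = True"
| "ssat I l n SFalse = False"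
| "ssat I l n (SOut o') = (o' \<in> l n)"
| "ssat I l n (SNOut o') = (o' \<notin> l n)"
| "ssat I l n (SAnd f g) = (ssat I l n f \<and> ssat I l n g)"
| "ssat I l n (SOr f g) = (ssat I l n f \<or> ssat I l n g)"
| "ssat I l n (SA p) = (\<forall>ds. (\<forall>k. ds k \<subseteq> I) \<longrightarrow> psat I l n ds p)"
| "ssat I l n (SE p) = (\<exists>ds. (\<forall>k. ds k \<subseteq> I) \<and> psat I l n ds p)"
| "psat I l n ds (PState f) = ssat I l n f"
| "psat I l n ds (PIn i) = (i \<in> ds 0)"
| "psat I l n ds (PNIn i) = (i \<notin> ds 0)"
| "psat I l n ds (PAnd p q) = (psat I l n ds p \<and> psat I l n ds q)"
| "psat I l n ds (POr p q) = (psat I l n ds p \<or> psat I l n ds q)"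
| "psat I l n ds (PX p) = psat I l (path_node n ds 1) (path_shift ds 1) p"
| "psat I l n ds (PU p q) =
     (\<exists>k. psat I l (path_node n ds k) (path_shift ds k) q \<and>
          (\<forall>j<k. psat I l (path_node n ds j) (path_shift ds j) p))"
| "psat I l n ds (PR p q) =
     (\<forall>k. psat I l (path_node n ds k) (path_shift ds k) q \<or>
          (\<exists>j<k. psat I l (path_node n ds j) (path_shift ds j) p))"

definition tree_sat :: "'a set \<Rightarrow> ('a set list \<Rightarrow> 'a set) \<Rightarrow> 'a sform \<Rightarrow> bool" where
  "tree_sat I l \<Phi> = ssat I l [] \<Phi>"

definition moore_models :: "('a, 's) moore \<Rightarrow> 'a sform \<Rightarrow> bool" where
  "moore_models M \<Phi> = tree_sat (m_inputs M) (comp_tree M) \<Phi>"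

datatype 'x pbf = BTrue | BFalse | BAtom 'x | BAnd "'x pbf" "'x pbf" | BOr "'x pbf" "'x pbf"

primrec pbf_eval :: "('x \<Rightarrow> bool) \<Rightarrow> 'x pbf \<Rightarrow> bool" where
  "pbf_eval v BTrue = True"
| "pbf_eval v BFalse = False"
| "pbf_eval v (BAtom x) = v x"
| "pbf_eval v (BAnd f g) = (pbf_eval v f \<and> pbf_eval v g)"
| "pbf_eval v (BOr f g) = (pbf_eval v f \<or> pbf_eval v g)"

definition pbf_sat :: "'x set \<Rightarrow> 'x pbf \<Rightarrow> bool" where
  "pbf_sat S f = pbf_eval (\<lambda>x. x \<in> S) f"

primrec pbf_atoms :: "'x pbf \<Rightarrow> 'x set" where
  "pbf_atoms BTrue = {}"
| "pbf_atoms BFalse = {}"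
| "pbf_atoms (BAtom x) = {x}"
| "pbf_atoms (BAnd f g) = pbf_atoms f \<union> pbf_atoms g"
| "pbf_atoms (BOr f g) = pbf_atoms f \<union> pbf_atoms g"

primrec disj_related :: "'q set \<Rightarrow> ('d \<times> 'q) pbf \<Rightarrow> bool" where
  "disj_related B BTrue = True"
| "disj_related B BFalse = True"
| "disj_related B (BAtom x) = True"
| "disj_related B (BAnd f g) = (disj_related B f \<and> disj_related B g \<and>
     (snd ` pbf_atoms f \<inter> B = {} \<or> snd ` pbf_atoms g \<inter> B = {}))"
| "disj_related B (BOr f g) = (disj_related B f \<and> disj_related B g)"

primrec conj_related :: "'q set \<Rightarrow> ('d \<times> 'q) pbf \<Rightarrow> bool" where
  "conj_related B BTrue = True"
| "conj_related B BFalse = True"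
| "conj_related B (BAtom x) = True"
| "conj_related B (BAnd f g) = (conj_related B f \<and> conj_related B g)"
| "conj_related B (BOr f g) = (conj_related B f \<and> conj_related B g \<and>
     (snd ` pbf_atoms f \<inter> B = {} \<or> snd ` pbf_atoms g \<inter> B = {}))"

record ('a, 'q) aht =
  a_states :: "'q set"
  a_init   :: 'q
  a_delta  :: "'q \<Rightarrow> 'a set \<Rightarrow> ('a set \<times> 'q) pbf"
  a_acc    :: "'q set"
  a_Nblocks :: "'q set set"
  a_Ublocks :: "'q set set"
  a_order  :: "('q set \<times> 'q set) set"

definition hesitant_ata :: "'a set \<Rightarrow> 'a set \<Rightarrow> ('a, 'q) aht \<Rightarrow> bool" where
  "hesitant_ata Ins Outs A \<longleftrightarrow>
     finite (a_states A) \<and> a_init A \<in> a_states A \<and> a_acc A \<subseteq> a_states A \<and>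
     (\<forall>q \<in> a_states A. \<forall>a. a \<subseteq> Outs \<longrightarrow> pbf_atoms (a_delta A q a) \<subseteq> Pow Ins \<times> a_states A) \<and>
     a_Nblocks A \<inter> a_Ublocks A = {} \<and>
     partition_on (a_states A) (a_Nblocks A \<union> a_Ublocks A) \<and>
     partial_order_on (a_Nblocks A \<union> a_Ublocks A) (a_order A) \<and>
     (\<forall>B \<in> a_Nblocks A \<union> a_Ublocks A. \<forall>q \<in> B. \<forall>a. a \<subseteq> Outs \<longrightarrow>
        (\<forall>x \<in> pbf_atoms (a_delta A q a). snd x \<notin> B \<longrightarrow>
           (\<exists>B' \<in> a_Nblocks A \<union> a_Ublocks A. snd x \<in> B' \<and> (B', B) \<in> a_order A \<and> B' \<noteq> B)) \<and>
        (B \<in> a_Nblocks A \<longrightarrow> disj_related B (a_delta A q a)) \<and>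
        (B \<in> a_Ublocks A \<longrightarrow> conj_related B (a_delta A q a)))"

text \<open>A run-tree on the tree l is represented by the set of label sequences
 along its nodes: the node reached by the list \<open>[(d\<^sub>1,q\<^sub>1),...,(d\<^sub>k,q\<^sub>k)]\<close> is
 labelled \<open>(d\<^sub>1...d\<^sub>k, q\<^sub>k)\<close> (root: \<open>(\<epsilon>, q\<^sub>0)\<close>).  Children of a node carry
 pairwise distinct labels forming a set that satisfies \<open>\<delta>\<close>, so a run-tree is
 determined by this set.\<close>
definition run_state :: "('a, 'q) aht \<Rightarrow> ('a set \<times> 'q) list \<Rightarrow> 'q" where
  "run_state A x = (if x = [] then a_init A else snd (last x))"

definition run_node :: "('a set \<times> 'q) list \<Rightarrow> 'a set list" where
  "run_node x = map fst x"

definition is_run :: "'a set \<Rightarrow> ('a, 'q) aht \<Rightarrow> ('a set list \<Rightarrow> 'a set)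
                      \<Rightarrow> ('a set \<times> 'q) list set \<Rightarrow> bool" where
  "is_run I A l R \<longleftrightarrow>
     [] \<in> R \<and> (\<forall>x y. x @ [y] \<in> R \<longrightarrow> x \<in> R) \<and>
     (\<forall>x \<in> R. {y. x @ [y] \<in> R} \<subseteq> Pow I \<times> a_states A \<and>
              pbf_sat {y. x @ [y] \<in> R} (a_delta A (run_state A x) (l (run_node x))))"

definition hesitant_accepting :: "('a, 'q) aht \<Rightarrow> (nat \<Rightarrow> 'q) \<Rightarrow> bool" where
  "hesitant_accepting A \<pi> \<longleftrightarrow>
     (\<exists>B \<in> a_Ublocks A. (\<exists>k. \<forall>m\<ge>k. \<pi> m \<in> B) \<and> finite {m. \<pi> m \<in> a_acc A}) \<or>
     (\<exists>B \<in> a_Nblocks A. (\<exists>k. \<forall>m\<ge>k. \<pi> m \<in> B) \<and> infinite {m. \<pi> m \<in> a_acc A})"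

text \<open>Infinite branches of a run-tree are given by sequences \<open>\<beta>\<close> of child labels;
 the state sequence of the branch starts with \<open>q\<^sub>0\<close>.  (Finite branches end in a
 node whose obligation is satisfied by the empty set and impose no condition.)\<close>
definition accepts :: "'a set \<Rightarrow> ('a, 'q) aht \<Rightarrow> ('a set list \<Rightarrow> 'a set) \<Rightarrow> bool" where
  "accepts I A l \<longleftrightarrow>
     (\<exists>R. is_run I A l R \<and>
        (\<forall>\<beta>. (\<forall>k. map \<beta> [0..<k] \<in> R) \<longrightarrow>
              hesitant_accepting A (\<lambda>m. if m = 0 then a_init A else snd (\<beta> (m - 1)))))"

definition rank_cmp :: "('a, 'q) aht \<Rightarrow> 'q \<Rightarrow> 'q \<Rightarrow> nat \<Rightarrow> nat \<Rightarrow> bool" where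
  "rank_cmp A q q' r r' =
     (if \<exists>B \<in> a_Nblocks A. q \<in> B \<and> q' \<in> B then (if q \<in> a_acc A then True else r > r')
      else if \<exists>B \<in> a_Ublocks A. q \<in> B \<and> q' \<in> B then (if q \<in> a_acc A then r > r' else r \<ge> r')
      else True)"

definition rank_constraint ::
  "('a, 's) moore \<Rightarrow> ('a, 'q) aht \<Rightarrow> ('q \<Rightarrow> 's \<Rightarrow> bool) \<Rightarrow> ('q \<Rightarrow> 's \<Rightarrow> nat) \<Rightarrow> bool" where
  "rank_constraint M A rch \<rho> \<longleftrightarrow>
     rch (a_init A) (m_init M) \<and>
     (\<forall>q \<in> a_states A. \<forall>t \<in> m_states M.
        rch q t \<longrightarrow>
        pbf_eval (\<lambda>(d, q'). rch q' (m_trans M t d) \<and>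
                             rank_cmp A q q' (\<rho> q t) (\<rho> q' (m_trans M t d)))
                 (a_delta A q (m_out M t)))"

end

theory Submission
  imports Defs "HOL-Library.Infinite_Set"
begin

lemma pbf_eval_mono: "pbf_eval v f \<Longrightarrow> (\<And>a. v a \<Longrightarrow> w a) \<Longrightarrow> pbf_eval w f"
  by (induction f) auto

lemma pbf_eval_atoms: "pbf_atoms f \<subseteq> S \<Longrightarrow> pbf_eval v f = pbf_eval (\<lambda>a. a \<in> S \<and> v a) f"
  by (induction f) auto

lemma pbf_eval_witness: "pbf_eval v f \<Longrightarrow> \<not> pbf_eval w f \<Longrightarrow> \<exists>a. v a \<and> \<not> w a"
  using pbf_eval_mono by blast

lemma no_inf_descent:
  fixes f :: "nat \<Rightarrow> nat"
  assumes dec: "\<forall>m\<ge>K. f (Suc m) \<le> f m" and str: "\<forall>K'. \<exists>m\<ge>K'. f (Suc m) < f m"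
  shows False
proof -
  have mono: "f m' \<le> f m" if "K \<le> m" "m \<le> m'" for m m'
    using that(2)
  proof (induction m' rule: dec_induct)
    case base then show ?case by simp
  next
    case (step n) then show ?case using dec that(1) by (meson le_trans)
  qed
  have "\<exists>m\<ge>K. f m + n \<le> f K" for n
  proof (induction n)
    case 0 then show ?case by auto
  next
    case (Suc n)
    then obtain m where m: "m \<ge> K" "f m + n \<le> f K" by auto
    obtain m' where m': "m' \<ge> m" "f (Suc m') < f m'" using str by auto
    have "f m' \<le> f m" using mono m m' by auto
    then show ?case using m m' by (intro exI[of _ "Suc m'"]) auto
  qed
  then obtain m where "f m + Suc (f K) \<le> f K" by blast
  then show False by simp
qed

lemma finite_chain_bound:
  fixes Z :: "nat \<Rightarrow> 'a set"
  assumes "finite A" "\<forall>p\<in>A. \<exists>n. p \<in> Z n" "\<And>n m. n \<le> m \<Longrightarrow> Z n \<subseteq> Z m"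
  shows "\<exists>N. A \<subseteq> Z N"
  using assms(1,2)
proof (induction A rule: finite_induct)
  case empty then show ?case by auto
next
  case (insert p A)
  then obtain N where N: "A \<subseteq> Z N" by auto
  obtain n where n: "p \<in> Z n" using insert by auto
  have "Z N \<subseteq> Z (max N n)" by (rule assms(3), rule max.cobounded1)
  then have "A \<subseteq> Z (max N n)" using N by blast
  moreover have "Z n \<subseteq> Z (max N n)" by (rule assms(3)) (simp add: max_def)
  then have "p \<in> Z (max N n)" using n by blast
  ultimately show ?case by blast
qed

fun iter_ext :: "('x list \<Rightarrow> 'x list) \<Rightarrow> 'x list \<Rightarrow> nat \<Rightarrow> 'x list" where
  "iter_ext e x 0 = x"
| "iter_ext e x (Suc n) = iter_ext e x n @ e (iter_ext e x n)"

lemma iter_ext_prefix: "n \<le> m \<Longrightarrow> \<exists>w. iter_ext e x m = iter_ext e x n @ w"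
proof (induction m rule: dec_induct)
  case base then show ?case by auto
next
  case (step m) then show ?case by auto
qed

lemma branch_lemma:
  fixes S :: "'x list set"
  assumes xS: "x \<in> S"
    and step: "\<forall>y\<in>S. \<exists>w. w \<noteq> [] \<and> (\<forall>i\<le>length w. y @ take i w \<in> S) \<and> Ac (y @ w)"
  shows "\<exists>\<beta>. (\<forall>k\<ge>length x. map \<beta> [0..<k] \<in> S) \<and> (\<forall>k. \<exists>m. map \<beta> [0..<k] = take k m \<and> m \<in> S)
           \<and> (\<forall>K. \<exists>k\<ge>K. Ac (map \<beta> [0..<k]))"
proof -
  define e where "e y = (SOME w. w \<noteq> [] \<and> (\<forall>i\<le>length w. y @ take i w \<in> S) \<and> Ac (y @ w))" for y
  have e: "e y \<noteq> [] \<and> (\<forall>i\<le>length (e y). y @ take i (e y) \<in> S) \<and> Ac (y @ e y)" if "y \<in> S" for y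
  proof -
    have "\<exists>w. w \<noteq> [] \<and> (\<forall>i\<le>length w. y @ take i w \<in> S) \<and> Ac (y @ w)" using step that by blast
    then show ?thesis unfolding e_def by (rule someI_ex)
  qed
  let ?ys = "iter_ext e x"
  have inS: "?ys n \<in> S" for n
  proof (induction n)
    case 0 then show ?case using xS by simp
  next
    case (Suc n)
    then show ?case using e[OF Suc] by (auto dest: spec[of _ "length (e (?ys n))"])
  qed
  have len: "length (?ys n) \<ge> length x + n" for n
  proof (induction n)
    case 0 then show ?case by simp
  next
    case (Suc n)
    then show ?case using e[OF inS[of n]] by (cases "e (?ys n)") auto
  qed
  have inv: "\<forall>j. length x \<le> j \<and> j \<le> length (?ys n) \<longrightarrow> take j (?ys n) \<in> S" for n
  proof (induction n)
    case 0 then show ?case using xS by auto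
  next
    case (Suc n)
    show ?case
    proof (intro allI impI)
      fix j assume j: "length x \<le> j \<and> j \<le> length (?ys (Suc n))"
      show "take j (?ys (Suc n)) \<in> S"
      proof (cases "j \<le> length (?ys n)")
        case True then show ?thesis using Suc j by simp
      next
        case False
        define i where "i = j - length (?ys n)"
        have i: "j = length (?ys n) + i" "i \<le> length (e (?ys n))"
        proof -
          have "length (?ys (Suc n)) = length (?ys n) + length (e (?ys n))" by simp
          then show "j = length (?ys n) + i" "i \<le> length (e (?ys n))"
            using False j unfolding i_def by linarith+
        qed
        then show ?thesis using e[OF inS[of n]] by simp
      qed
    qed
  qed
  define \<beta> where "\<beta> k = ?ys (Suc k) ! k" for k
  have mapb: "map \<beta> [0..<k] = take k (?ys m)" if "k \<le> length (?ys m)" for k m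
  proof (rule nth_equalityI)
    show "length (map \<beta> [0..<k]) = length (take k (?ys m))" using that by simp
  next
    fix i assume "i < length (map \<beta> [0..<k])"
    then have i: "i < k" by simp
    have "?ys (Suc i) ! i = ?ys m ! i"
    proof (cases "Suc i \<le> m")
      case True
      then obtain w where "?ys m = ?ys (Suc i) @ w" using iter_ext_prefix by blast
      moreover have "i < length (?ys (Suc i))" using len[of "Suc i"] by simp
      ultimately show ?thesis by (simp add: nth_append del: iter_ext.simps)
    next
      case False
      then obtain w where "?ys (Suc i) = ?ys m @ w" using iter_ext_prefix[of m "Suc i"] by auto
      moreover have "i < length (?ys m)" using i that by simp
      ultimately show ?thesis by (simp add: nth_append del: iter_ext.simps)
    qed
    then show "map \<beta> [0..<k] ! i = take k (?ys m) ! i" using i by (simp add: \<beta>_def)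
  qed
  have kk: "k \<le> length (?ys k)" for k using len[of k] by simp
  show ?thesis
  proof (rule exI[of _ \<beta>], intro conjI allI impI)
    fix k assume "length x \<le> k"
    then show "map \<beta> [0..<k] \<in> S" using mapb[OF kk[of k]] inv[of k] kk[of k] by simp
  next
    fix k show "\<exists>m. map \<beta> [0..<k] = take k m \<and> m \<in> S" using mapb[OF kk[of k]] inS by blast
  next
    fix K
    let ?k = "length (?ys (Suc K))"
    have "map \<beta> [0..<?k] = ?ys (Suc K)" using mapb[of ?k "Suc K"] by simp
    moreover have "Ac (?ys (Suc K))" using e[OF inS[of K]] by simp
    moreover have "?k \<ge> K" using len[of "Suc K"] by simp
    ultimately show "\<exists>k\<ge>K. Ac (map \<beta> [0..<k])" by metis
  qed
qed

locale runtree =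
  fixes R :: "'x list set" and pos :: "'x list \<Rightarrow> 'p" and succ :: "'p \<Rightarrow> 'x \<Rightarrow> 'p"
    and phi :: "'p \<Rightarrow> 'x pbf"
  assumes pref: "\<And>y a. y @ [a] \<in> R \<Longrightarrow> y \<in> R"
    and pos_snoc: "\<And>y a. pos (y @ [a]) = succ (pos y) a"
    and sat: "\<And>y. y \<in> R \<Longrightarrow> pbf_eval (\<lambda>a. y @ [a] \<in> R) (phi (pos y))"
    and fin: "finite (pos ` R)"
begin

lemma take_in: "y \<in> R \<Longrightarrow> take i y \<in> R"
proof (induction y rule: rev_induct)
  case Nil then show ?case by simp
next
  case (snoc a y)
  then show ?case using pref[of y a] by (cases "i \<le> length y") auto
qed

lemma branch_R:
  assumes "x \<in> S" "S \<subseteq> R"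
    and "\<forall>y\<in>S. \<exists>w. w \<noteq> [] \<and> (\<forall>i\<le>length w. y @ take i w \<in> S) \<and> Ac (y @ w)"
  shows "\<exists>\<beta>. (\<forall>k. map \<beta> [0..<k] \<in> R) \<and> (\<forall>k\<ge>length x. map \<beta> [0..<k] \<in> S)
           \<and> (\<forall>K. \<exists>k\<ge>K. Ac (map \<beta> [0..<k]))"
proof -
  obtain \<beta> where b: "\<forall>k\<ge>length x. map \<beta> [0..<k] \<in> S" "\<forall>k. \<exists>m. map \<beta> [0..<k] = take k m \<and> m \<in> S"
     "\<forall>K. \<exists>k\<ge>K. Ac (map \<beta> [0..<k])"
    using branch_lemma[OF assms(1,3)] by blast
  have "\<forall>k. map \<beta> [0..<k] \<in> R"
  proof
    fix k
    obtain m where m: "map \<beta> [0..<k] = take k m" "m \<in> S" using b(2) by blast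
    then have "m \<in> R" using assms(2) by blast
    then show "map \<beta> [0..<k] \<in> R" unfolding m(1) by (rule take_in)
  qed
  then show ?thesis using b(1,3) by (intro exI[of _ \<beta>]) simp
qed

lemma buchi_rank:
  fixes BB accP :: "'p set"
  assumes nobad: "\<not> (\<exists>\<beta> K. (\<forall>k. map \<beta> [0..<k] \<in> R) \<and> (\<forall>k\<ge>K. pos (map \<beta> [0..<k]) \<in> BB - accP))"
  shows "\<exists>\<rho>::'p\<Rightarrow>nat. \<forall>p\<in>pos ` R. p \<in> BB \<longrightarrow> p \<notin> accP \<longrightarrow>
     pbf_eval (\<lambda>a. succ p a \<in> pos ` R \<and> (succ p a \<in> BB \<longrightarrow> \<rho> (succ p a) < \<rho> p)) (phi p)"
proof -
  define F where "F X = {p \<in> pos ` R. p \<in> accP \<or>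
      pbf_eval (\<lambda>a. succ p a \<in> pos ` R \<and> (succ p a \<in> BB \<longrightarrow> succ p a \<in> X)) (phi p)}" for X
  define Z where "Z n = (F ^^ n) {}" for n
  have Z0: "Z 0 = {}" and ZS: "Z (Suc n) = F (Z n)" for n by (simp_all add: Z_def)
  have Fmono: "F X \<subseteq> F Y" if "X \<subseteq> Y" for X Y
  proof
    fix p assume "p \<in> F X"
    have i: "pbf_eval (\<lambda>a. succ p a \<in> pos ` R \<and> (succ p a \<in> BB \<longrightarrow> succ p a \<in> X)) (phi p) \<Longrightarrow>
          pbf_eval (\<lambda>a. succ p a \<in> pos ` R \<and> (succ p a \<in> BB \<longrightarrow> succ p a \<in> Y)) (phi p)"
      by (erule pbf_eval_mono) (use that in blast)
    from \<open>p \<in> F X\<close> show "p \<in> F Y" unfolding F_def using i by blast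
  qed
  have Zinc: "Z n \<subseteq> Z (Suc n)" for n
  proof (induction n)
    case 0 then show ?case by (simp add: Z0)
  next
    case (Suc n) then show ?case using Fmono by (simp add: ZS)
  qed
  have Zmono: "Z n \<subseteq> Z m" if "n \<le> m" for n m
    by (rule lift_Suc_mono_le[of Z, OF Zinc that])
  have ZR: "Z n \<subseteq> pos ` R" for n
    by (cases n) (auto simp: Z0 ZS F_def)
  have "finite (\<Union>n. Z n)" by (rule finite_subset[OF _ fin]) (use ZR in blast)
  then obtain N where N: "(\<Union>n. Z n) \<subseteq> Z N"
    using finite_chain_bound[of "\<Union>n. Z n" Z] Zmono by blast
  have ZN: "F (Z N) = Z N"
  proof -
    have "Z (Suc N) \<subseteq> Z N" using N by blast
    then show ?thesis using Zinc[of N] ZS[of N] by blast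
  qed
  have allin: "p \<in> Z N" if "p \<in> pos ` R" "p \<in> BB" for p
  proof (rule ccontr)
    assume pn: "p \<notin> Z N"
    define S where "S = {y \<in> R. pos y \<in> BB \<and> pos y \<notin> Z N}"
    obtain x where x: "x \<in> R" "p = pos x" using \<open>p \<in> pos ` R\<close> by blast
    have xS: "x \<in> S" using x \<open>p \<in> BB\<close> pn by (simp add: S_def)
    have Snacc: "pos y \<notin> accP" if "y \<in> S" for y
    proof
      assume "pos y \<in> accP"
      then have "pos y \<in> F (Z N)" using that unfolding S_def F_def by auto
      then show False using that ZN unfolding S_def by auto
    qed
    have step: "\<forall>y\<in>S. \<exists>w. w \<noteq> [] \<and> (\<forall>i\<le>length w. y @ take i w \<in> S) \<and> True"
    proof
      fix y assume y: "y \<in> S"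
      then have yR: "y \<in> R" and ynot: "pos y \<notin> F (Z N)" using ZN by (auto simp: S_def)
      have "\<not> pbf_eval (\<lambda>a. succ (pos y) a \<in> pos ` R \<and> (succ (pos y) a \<in> BB \<longrightarrow> succ (pos y) a \<in> Z N)) (phi (pos y))"
        using ynot yR unfolding F_def by blast
      then obtain a where a: "y @ [a] \<in> R"
        "\<not> (succ (pos y) a \<in> pos ` R \<and> (succ (pos y) a \<in> BB \<longrightarrow> succ (pos y) a \<in> Z N))"
        using pbf_eval_witness[OF sat[OF yR]] by blast
      have "pos (y @ [a]) \<in> pos ` R" using a(1) by blast
      then have "y @ [a] \<in> S" using a pos_snoc[of y a] by (auto simp: S_def)
      moreover have "\<forall>i\<le>length [a]. y @ take i [a] \<in> S"
      proof (intro allI impI)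
        fix i :: nat assume "i \<le> length [a]"
        then have "i = 0 \<or> i = 1" by auto
        then show "y @ take i [a] \<in> S" using y \<open>y @ [a] \<in> S\<close> by auto
      qed
      ultimately show "\<exists>w. w \<noteq> [] \<and> (\<forall>i\<le>length w. y @ take i w \<in> S) \<and> True"
        by blast
    qed
    obtain \<beta> where b: "\<forall>k. map \<beta> [0..<k] \<in> R" "\<forall>k\<ge>length x. map \<beta> [0..<k] \<in> S"
      using branch_R[OF xS _ step] S_def by blast
    have "\<forall>k\<ge>length x. pos (map \<beta> [0..<k]) \<in> BB - accP"
      using b(2) Snacc by (auto simp: S_def)
    then show False using nobad b(1) by blast
  qed
  define \<rho> where "\<rho> p = (LEAST n. p \<in> Z n)" for p
  show ?thesis
  proof (intro exI[of _ \<rho>] ballI impI)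
    fix p assume p: "p \<in> pos ` R" "p \<in> BB" "p \<notin> accP"
    have "p \<in> Z (\<rho> p)" unfolding \<rho>_def using allin[OF p(1,2)] by (rule LeastI)
    then obtain n where n: "\<rho> p = Suc n" "p \<in> F (Z n)" using Z0 ZS by (cases "\<rho> p") auto
    then have "pbf_eval (\<lambda>a. succ p a \<in> pos ` R \<and> (succ p a \<in> BB \<longrightarrow> succ p a \<in> Z n)) (phi p)"
      using p(3) by (simp add: F_def)
    then show "pbf_eval (\<lambda>a. succ p a \<in> pos ` R \<and> (succ p a \<in> BB \<longrightarrow> \<rho> (succ p a) < \<rho> p)) (phi p)"
    proof (rule pbf_eval_mono)
      fix a assume "succ p a \<in> pos ` R \<and> (succ p a \<in> BB \<longrightarrow> succ p a \<in> Z n)"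
      moreover have "succ p a \<in> Z n \<Longrightarrow> \<rho> (succ p a) \<le> n" unfolding \<rho>_def by (rule Least_le)
      ultimately show "succ p a \<in> pos ` R \<and> (succ p a \<in> BB \<longrightarrow> \<rho> (succ p a) < \<rho> p)"
        using n(1) by auto
    qed
  qed
qed

end

context runtree begin

lemma cobuchi_rank:
  fixes BB accP :: "'p set"
  assumes nobad: "\<not> (\<exists>\<beta> K. (\<forall>k. map \<beta> [0..<k] \<in> R) \<and> (\<forall>k\<ge>K. pos (map \<beta> [0..<k]) \<in> BB)
                         \<and> (\<forall>K'. \<exists>k\<ge>K'. pos (map \<beta> [0..<k]) \<in> accP))"
  shows "\<exists>\<rho>::'p\<Rightarrow>nat. \<forall>p\<in>pos ` R. p \<in> BB \<longrightarrow>
     pbf_eval (\<lambda>a. succ p a \<in> pos ` R \<and> (succ p a \<in> BB \<longrightarrow>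
         (if p \<in> accP then \<rho> (succ p a) < \<rho> p else \<rho> (succ p a) \<le> \<rho> p))) (phi p)"
proof -
  define G where "G Yp X = {p \<in> pos ` R.
      pbf_eval (\<lambda>a. succ p a \<in> pos ` R \<and> (succ p a \<in> BB \<longrightarrow> succ p a \<in> X \<and> (p \<in> accP \<longrightarrow> succ p a \<in> Yp))) (phi p)}" for Yp X
  have Gmono: "G Yp X \<subseteq> G Yp' X'" if "X \<subseteq> X'" "Yp \<subseteq> Yp'" for X X' Yp Yp'
  proof
    fix p assume "p \<in> G Yp X"
    have i: "pbf_eval (\<lambda>a. succ p a \<in> pos ` R \<and> (succ p a \<in> BB \<longrightarrow> succ p a \<in> X \<and> (p \<in> accP \<longrightarrow> succ p a \<in> Yp))) (phi p) \<Longrightarrow>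
        pbf_eval (\<lambda>a. succ p a \<in> pos ` R \<and> (succ p a \<in> BB \<longrightarrow> succ p a \<in> X' \<and> (p \<in> accP \<longrightarrow> succ p a \<in> Yp'))) (phi p)"
      by (erule pbf_eval_mono) (use that in blast)
    from \<open>p \<in> G Yp X\<close> show "p \<in> G Yp' X'" unfolding G_def using i by blast
  qed
  have monoG: "mono (G Yp)" for Yp by (rule monoI) (rule Gmono, auto)
  define H where "H Yp = gfp (G Yp)" for Yp
  have Hfix: "H Yp = G Yp (H Yp)" for Yp unfolding H_def by (rule gfp_unfold[OF monoG])
  have Hmono: "H Yp \<subseteq> H Yp'" if "Yp \<subseteq> Yp'" for Yp Yp'
    unfolding H_def by (rule gfp_mono) (rule Gmono, auto simp: that)
  define Y where "Y n = (H ^^ n) {}" for n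
  have Y0: "Y 0 = {}" and YS: "Y (Suc n) = H (Y n)" for n by (simp_all add: Y_def)
  have Yinc: "Y n \<subseteq> Y (Suc n)" for n
  proof (induction n)
    case 0 then show ?case by (simp add: Y0)
  next
    case (Suc n) then show ?case using Hmono by (simp add: YS)
  qed
  have Ymono: "Y n \<subseteq> Y m" if "n \<le> m" for n m
    by (rule lift_Suc_mono_le[of Y, OF Yinc that])
  have YR: "Y n \<subseteq> pos ` R" for n
  proof (cases n)
    case 0 then show ?thesis by (simp add: Y0)
  next
    case (Suc m)
    have "Y n = G (Y m) (Y n)" using Hfix by (simp add: Suc YS)
    then show ?thesis unfolding G_def by blast
  qed
  have "finite (\<Union>n. Y n)" by (rule finite_subset[OF _ fin]) (use YR in blast)
  then obtain N where N: "(\<Union>n. Y n) \<subseteq> Y N"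
    using finite_chain_bound[of "\<Union>n. Y n" Y] Ymono by blast
  define W where "W = Y N"
  have WH: "H W = W"
  proof -
    have "Y (Suc N) \<subseteq> Y N" using N by blast
    then show ?thesis using Yinc[of N] YS[of N] unfolding W_def by blast
  qed
  have WG: "G W W = W" using Hfix[of W] WH by simp
  have coind: "X \<subseteq> W" if "X \<subseteq> G W X" for X
  proof -
    have "X \<subseteq> gfp (G W)" using that by (rule gfp_upperbound)
    then show ?thesis using WH by (simp add: H_def)
  qed
  have allin: "p \<in> W" if "p \<in> pos ` R" "p \<in> BB" for p
  proof (rule ccontr)
    assume pn: "p \<notin> W"
    define S where "S = {y \<in> R. pos y \<in> BB \<and> pos y \<notin> W}"
    obtain x where x: "x \<in> R" "p = pos x" using \<open>p \<in> pos ` R\<close> by blast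
    have xS: "x \<in> S" using x \<open>p \<in> BB\<close> pn by (simp add: S_def)
    have child: "\<exists>a. y @ [a] \<in> S" if y: "y \<in> S" "pos y \<in> accP" for y
    proof (rule ccontr)
      assume nc: "\<not> (\<exists>a. y @ [a] \<in> S)"
      have yR: "y \<in> R" using y by (simp add: S_def)
      have "pbf_eval (\<lambda>a. succ (pos y) a \<in> pos ` R \<and> (succ (pos y) a \<in> BB \<longrightarrow>
               succ (pos y) a \<in> W \<and> (pos y \<in> accP \<longrightarrow> succ (pos y) a \<in> W))) (phi (pos y))"
      proof (rule pbf_eval_mono[OF sat[OF yR]])
        fix a assume a: "y @ [a] \<in> R"
        then have "y @ [a] \<notin> S" using nc by blast
        moreover have "succ (pos y) a \<in> pos ` R" using a pos_snoc[of y a] by (metis imageI)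
        ultimately show "succ (pos y) a \<in> pos ` R \<and> (succ (pos y) a \<in> BB \<longrightarrow>
               succ (pos y) a \<in> W \<and> (pos y \<in> accP \<longrightarrow> succ (pos y) a \<in> W))"
          using a pos_snoc[of y a] by (auto simp: S_def)
      qed
      then have "pos y \<in> G W W" unfolding G_def using yR by blast
      then show False using WG y by (simp add: S_def)
    qed
    have reach: "\<exists>w. (\<forall>i\<le>length w. y @ take i w \<in> S) \<and> pos (y @ w) \<in> accP" if y: "y \<in> S" for y
    proof (rule ccontr)
      assume nr: "\<not> (\<exists>w. (\<forall>i\<le>length w. y @ take i w \<in> S) \<and> pos (y @ w) \<in> accP)"
      define Re where "Re = {y @ w | w. \<forall>i\<le>length w. y @ take i w \<in> S}"
      define X where "X = W \<union> pos ` Re"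
      have "X \<subseteq> G W X"
      proof
        fix p assume "p \<in> X"
        then consider "p \<in> W" | "p \<in> pos ` Re" unfolding X_def by blast
        then show "p \<in> G W X"
        proof cases
          case 1 then show ?thesis using WG Gmono[of W X W W] by (auto simp: X_def)
        next
          case 2
          then obtain w where w: "p = pos (y @ w)" "\<forall>i\<le>length w. y @ take i w \<in> S"
            unfolding Re_def by blast
          let ?z = "y @ w"
          have zS: "?z \<in> S" using w(2)[rule_format, of "length w"] by simp
          then have zR: "?z \<in> R" by (simp add: S_def)
          have zacc: "pos ?z \<notin> accP" using nr w(2) by blast
          have "pbf_eval (\<lambda>a. succ p a \<in> pos ` R \<and> (succ p a \<in> BB \<longrightarrow>
               succ p a \<in> X \<and> (p \<in> accP \<longrightarrow> succ p a \<in> W))) (phi p)"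
            unfolding w(1)
          proof (rule pbf_eval_mono[OF sat[OF zR]])
            fix a assume a: "?z @ [a] \<in> R"
            have sp: "succ (pos ?z) a = pos (?z @ [a])" by (rule pos_snoc[symmetric])
            have "pos (?z @ [a]) \<in> X" if inB: "pos (?z @ [a]) \<in> BB"
            proof (cases "pos (?z @ [a]) \<in> W")
              case True then show ?thesis by (simp add: X_def)
            next
              case False
              then have zaS: "?z @ [a] \<in> S" using a inB by (simp add: S_def)
              have "\<forall>i\<le>length (w @ [a]). y @ take i (w @ [a]) \<in> S"
              proof (intro allI impI)
                fix i assume "i \<le> length (w @ [a])"
                then consider "i \<le> length w" | "i = Suc (length w)" by (cases "i \<le> length w") auto
                then show "y @ take i (w @ [a]) \<in> S"
                  by cases (use w(2) zaS in auto)
              qed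
              then have "y @ (w @ [a]) \<in> Re" unfolding Re_def by blast
              then show ?thesis unfolding X_def by auto
            qed
            then show "succ (pos ?z) a \<in> pos ` R \<and> (succ (pos ?z) a \<in> BB \<longrightarrow>
               succ (pos ?z) a \<in> X \<and> (pos ?z \<in> accP \<longrightarrow> succ (pos ?z) a \<in> W))"
              using sp a zacc by auto
          qed
          then show ?thesis using zR w(1) unfolding G_def by blast
        qed
      qed
      then have "X \<subseteq> W" by (rule coind)
      moreover have "y \<in> Re" unfolding Re_def using y by (auto intro: exI[of _ "[]"])
      ultimately show False using y by (auto simp: X_def S_def)
    qed
    have step: "\<forall>y\<in>S. \<exists>w. w \<noteq> [] \<and> (\<forall>i\<le>length w. y @ take i w \<in> S) \<and> pos (y @ w) \<in> accP"
    proof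
      fix y assume y: "y \<in> S"
      obtain w0 where w0: "\<forall>i\<le>length w0. y @ take i w0 \<in> S" "pos (y @ w0) \<in> accP"
        using reach[OF y] by blast
      show "\<exists>w. w \<noteq> [] \<and> (\<forall>i\<le>length w. y @ take i w \<in> S) \<and> pos (y @ w) \<in> accP"
      proof (cases "w0 = []")
        case False then show ?thesis using w0 by blast
      next
        case True
        then have "pos y \<in> accP" using w0 by simp
        then obtain a where a: "y @ [a] \<in> S" using child[OF y] by blast
        obtain w1 where w1: "\<forall>i\<le>length w1. (y @ [a]) @ take i w1 \<in> S" "pos ((y @ [a]) @ w1) \<in> accP"
          using reach[OF a] by blast
        have "\<forall>i\<le>length (a # w1). y @ take i (a # w1) \<in> S"
        proof (intro allI impI)
          fix i assume i: "i \<le> length (a # w1)"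
          show "y @ take i (a # w1) \<in> S"
          proof (cases i)
            case 0 then show ?thesis using y by simp
          next
            case (Suc j) then show ?thesis using w1(1) i by auto
          qed
        qed
        then show ?thesis using w1(2) by (intro exI[of _ "a # w1"]) auto
      qed
    qed
    obtain \<beta> where b: "\<forall>k. map \<beta> [0..<k] \<in> R" "\<forall>k\<ge>length x. map \<beta> [0..<k] \<in> S"
        "\<forall>K. \<exists>k\<ge>K. pos (map \<beta> [0..<k]) \<in> accP"
      using branch_R[OF xS _ step] S_def by blast
    have "\<forall>k\<ge>length x. pos (map \<beta> [0..<k]) \<in> BB"
      using b(2) by (auto simp: S_def)
    then show False using nobad b(1,3) by blast
  qed
  define \<rho> where "\<rho> p = (LEAST n. p \<in> Y n)" for p
  show ?thesis
  proof (intro exI[of _ \<rho>] ballI impI)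
    fix p assume p: "p \<in> pos ` R" "p \<in> BB"
    have "p \<in> Y N" using allin[OF p] by (simp add: W_def)
    then have "p \<in> Y (\<rho> p)" unfolding \<rho>_def by (rule LeastI)
    then obtain n where n: "\<rho> p = Suc n" "p \<in> H (Y n)" using Y0 YS by (cases "\<rho> p") auto
    then have "p \<in> G (Y n) (Y (Suc n))" using Hfix YS by simp
    then have "pbf_eval (\<lambda>a. succ p a \<in> pos ` R \<and> (succ p a \<in> BB \<longrightarrow> succ p a \<in> Y (Suc n) \<and> (p \<in> accP \<longrightarrow> succ p a \<in> Y n))) (phi p)"
      by (simp add: G_def)
    then show "pbf_eval (\<lambda>a. succ p a \<in> pos ` R \<and> (succ p a \<in> BB \<longrightarrow>
         (if p \<in> accP then \<rho> (succ p a) < \<rho> p else \<rho> (succ p a) \<le> \<rho> p))) (phi p)"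
    proof (rule pbf_eval_mono)
      fix a assume a: "succ p a \<in> pos ` R \<and> (succ p a \<in> BB \<longrightarrow> succ p a \<in> Y (Suc n) \<and> (p \<in> accP \<longrightarrow> succ p a \<in> Y n))"
      have l1: "succ p a \<in> Y (Suc n) \<Longrightarrow> \<rho> (succ p a) \<le> Suc n" unfolding \<rho>_def by (rule Least_le)
      have l2: "succ p a \<in> Y n \<Longrightarrow> \<rho> (succ p a) \<le> n" unfolding \<rho>_def by (rule Least_le)
      show "succ p a \<in> pos ` R \<and> (succ p a \<in> BB \<longrightarrow>
         (if p \<in> accP then \<rho> (succ p a) < \<rho> p else \<rho> (succ p a) \<le> \<rho> p))"
        using a l1 l2 n(1) by auto
    qed
  qed
qed

end

lemma m_run_nil[simp]: "m_run M t [] = t" by (simp add: m_run_def)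
lemma m_run_snoc[simp]: "m_run M t (w @ [d]) = m_trans M (m_run M t w) d" by (simp add: m_run_def)

lemma m_run_in:
  assumes "moore_system M" "t \<in> m_states M" "w \<in> lists (Pow (m_inputs M))"
  shows "m_run M t w \<in> m_states M"
  using assms(3)
proof (induction w rule: rev_induct)
  case Nil then show ?case using assms(2) by simp
next
  case (snoc d w) then show ?case using assms(1) by (auto simp: moore_system_def)
qed

lemma comp_tree_sub:
  assumes "moore_system M" "w \<in> lists (Pow (m_inputs M))"
  shows "comp_tree M w \<subseteq> m_outputs M"
proof -
  have "m_run M (m_init M) w \<in> m_states M" 
    by (rule m_run_in[OF assms(1) _ assms(2)]) (use assms(1) in \<open>simp add: moore_system_def\<close>)
  then show ?thesis using assms(1) by (auto simp: comp_tree_def moore_system_def)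
qed

lemma run_state_map: "run_state A (map \<beta> [0..<m]) = (if m = 0 then a_init A else snd (\<beta> (m - 1)))"
  by (cases m) (auto simp: run_state_def)

lemma blk_unique:
  assumes "hesitant_ata Ins Outs A" "B \<in> a_Nblocks A \<union> a_Ublocks A" "B' \<in> a_Nblocks A \<union> a_Ublocks A" "q \<in> B" "q \<in> B'"
  shows "B = B'"
proof -
  have "disjoint (a_Nblocks A \<union> a_Ublocks A)" using assms(1) by (simp add: hesitant_ata_def partition_on_def)
  then show ?thesis using assms(2-5) unfolding disjoint_def by blast
qed

lemma blk_ex:
  assumes "hesitant_ata Ins Outs A" "q \<in> a_states A"
  shows "\<exists>B \<in> a_Nblocks A \<union> a_Ublocks A. q \<in> B"
proof -
  have "\<Union>(a_Nblocks A \<union> a_Ublocks A) = a_states A" using assms(1) by (simp add: hesitant_ata_def partition_on_def)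
  then show ?thesis using assms(2) by blast
qed

lemma rank_cmp_block:
  assumes h: "hesitant_ata Ins Outs A" and B: "B \<in> a_Nblocks A \<union> a_Ublocks A" and q: "q \<in> B"
  shows "rank_cmp A q q' r r' = (if q' \<in> B then (if B \<in> a_Nblocks A then (q \<in> a_acc A \<or> r' < r)
            else (if q \<in> a_acc A then r' < r else r' \<le> r)) else True)"
proof -
  have dis: "a_Nblocks A \<inter> a_Ublocks A = {}" using h by (simp add: hesitant_ata_def)
  have u: "B' = B" if "B' \<in> a_Nblocks A \<union> a_Ublocks A" "q \<in> B'" for B'
    using blk_unique[OF h that(1) B that(2) q] by blast
  show ?thesis
  proof (cases "q' \<in> B")
    case True
    show ?thesis
    proof (cases "B \<in> a_Nblocks A")
      case True then show ?thesis using \<open>q' \<in> B\<close> q unfolding rank_cmp_def by auto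
    next
      case False
      then have "B \<in> a_Ublocks A" using B by blast
      moreover have "\<not> (\<exists>B' \<in> a_Nblocks A. q \<in> B' \<and> q' \<in> B')" using u False by blast
      ultimately show ?thesis using \<open>q' \<in> B\<close> q False unfolding rank_cmp_def by auto
    qed
  next
    case False
    have "\<not> (\<exists>B' \<in> a_Nblocks A. q \<in> B' \<and> q' \<in> B')" "\<not> (\<exists>B' \<in> a_Ublocks A. q \<in> B' \<and> q' \<in> B')"
      using u False by blast+
    then show ?thesis using False unfolding rank_cmp_def by auto
  qed
qed

lemma eventually_const:
  assumes fin: "finite BL" and po: "partial_order_on BL r" and bin: "\<forall>m. b m \<in> BL"
    and st: "\<forall>m. b (Suc m) = b m \<or> ((b (Suc m), b m) \<in> r \<and> b (Suc m) \<noteq> b m)"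
  shows "\<exists>K. \<forall>m\<ge>K. b m = b K"
proof -
  define c where "c m = card {B \<in> BL. (B, b m) \<in> r}" for m
  have refl: "refl_on BL r" and tr: "trans r" and anti: "antisym r"
    using partial_order_onD[OF po] by auto
  have cdec: "c (Suc m) < c m" if ne: "b (Suc m) \<noteq> b m" for m
  proof -
    have rr: "(b (Suc m), b m) \<in> r" using st ne by blast
    have "{B \<in> BL. (B, b (Suc m)) \<in> r} \<subset> {B \<in> BL. (B, b m) \<in> r}"
    proof
      show "{B \<in> BL. (B, b (Suc m)) \<in> r} \<subseteq> {B \<in> BL. (B, b m) \<in> r}"
        using tr rr unfolding trans_def by blast
      have "b m \<in> {B \<in> BL. (B, b m) \<in> r}" using refl bin unfolding refl_on_def by blast
      moreover have "b m \<notin> {B \<in> BL. (B, b (Suc m)) \<in> r}" using anti rr ne unfolding antisym_def by blast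
      ultimately show "{B \<in> BL. (B, b (Suc m)) \<in> r} \<noteq> {B \<in> BL. (B, b m) \<in> r}" by blast
    qed
    then show ?thesis unfolding c_def by (rule psubset_card_mono[rotated]) (use fin in simp)
  qed
  obtain K where K: "\<forall>m. c K \<le> c m" using ex_has_least_nat[of "\<lambda>_. True" 0 c] by blast
  have "b m = b K" if "K \<le> m" for m
    using that
  proof (induction m rule: dec_induct)
    case base then show ?case by simp
  next
    case (step m)
    show ?case
    proof (rule ccontr)
      assume "b (Suc m) \<noteq> b K"
      then have "b (Suc m) \<noteq> b m" using step by simp
      then have "c (Suc m) < c m" by (rule cdec)
      moreover have "c m = c K" using step by (simp add: c_def)
      ultimately show False using K[rule_format, of "Suc m"] by simp
    qed
  qed
  then show ?thesis by blast
qed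

lemma sound:
  assumes ms: "moore_system M" and h: "hesitant_ata (m_inputs M) (m_outputs M) A"
    and rc: "rank_constraint M A rch \<rho>"
  shows "accepts (m_inputs M) A (comp_tree M)"
proof -
  let ?BL = "a_Nblocks A \<union> a_Ublocks A"
  define pos where "pos y = (run_state A y, m_run M (m_init M) (run_node y))" for y
  define V where "V q t a = (rch (snd a) (m_trans M t (fst a)) \<and>
      rank_cmp A q (snd a) (\<rho> q t) (\<rho> (snd a) (m_trans M t (fst a))))" for q t a
  define ok where "ok y a = (a \<in> pbf_atoms (a_delta A (fst (pos y)) (m_out M (snd (pos y)))) \<and>
      V (fst (pos y)) (snd (pos y)) a)" for y a
  define R where "R = {x. \<forall>i<length x. ok (take i x) (x ! i)}"
  have Rsnoc: "y @ [a] \<in> R \<longleftrightarrow> y \<in> R \<and> ok y a" for y a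
    by (auto simp: R_def less_Suc_eq nth_append)
  have pos_snoc: "pos (y @ [a]) = (snd a, m_trans M (snd (pos y)) (fst a))" for y a
    by (simp add: pos_def run_state_def run_node_def)
  have pos_nil: "pos [] = (a_init A, m_init M)" by (simp add: pos_def run_state_def run_node_def)
  have hs: "finite (a_states A)" "a_init A \<in> a_states A"
    "\<And>q a. q \<in> a_states A \<Longrightarrow> a \<subseteq> m_outputs M \<Longrightarrow> pbf_atoms (a_delta A q a) \<subseteq> Pow (m_inputs M) \<times> a_states A"
    using h by (auto simp: hesitant_ata_def)
  have msf: "m_init M \<in> m_states M" "\<And>t e. t \<in> m_states M \<Longrightarrow> e \<subseteq> m_inputs M \<Longrightarrow> m_trans M t e \<in> m_states M"
    "\<And>t. t \<in> m_states M \<Longrightarrow> m_out M t \<subseteq> m_outputs M"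
    using ms by (auto simp: moore_system_def)
  have rc0: "rch (a_init A) (m_init M)" and
    rc1: "\<And>q t. q \<in> a_states A \<Longrightarrow> t \<in> m_states M \<Longrightarrow> rch q t \<Longrightarrow>
        pbf_eval (V q t) (a_delta A q (m_out M t))"
  proof -
    show "rch (a_init A) (m_init M)" using rc by (simp add: rank_constraint_def)
    fix q t assume "q \<in> a_states A" "t \<in> m_states M" "rch q t"
    then have "pbf_eval (\<lambda>(d, q'). rch q' (m_trans M t d) \<and> rank_cmp A q q' (\<rho> q t) (\<rho> q' (m_trans M t d)))
                 (a_delta A q (m_out M t))" using rc by (simp add: rank_constraint_def)
    moreover have "(\<lambda>(d, q'). rch q' (m_trans M t d) \<and> rank_cmp A q q' (\<rho> q t) (\<rho> q' (m_trans M t d))) = V q t"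
      by (auto simp: V_def)
    ultimately show "pbf_eval (V q t) (a_delta A q (m_out M t))" by simp
  qed
  have inv: "fst (pos y) \<in> a_states A \<and> snd (pos y) \<in> m_states M \<and> rch (fst (pos y)) (snd (pos y))"
    if "y \<in> R" for y
    using that
  proof (induction y rule: rev_induct)
    case Nil then show ?case using hs(2) msf(1) rc0 by (simp add: pos_nil)
  next
    case (snoc a y)
    then have yR: "y \<in> R" and oka: "ok y a" using Rsnoc by auto
    then have iy: "fst (pos y) \<in> a_states A" "snd (pos y) \<in> m_states M" using snoc.IH by auto
    have "a \<in> Pow (m_inputs M) \<times> a_states A" using oka hs(3)[OF iy(1) msf(3)[OF iy(2)]] by (auto simp: ok_def)
    then show ?case using oka msf(2)[OF iy(2)] by (auto simp: pos_snoc ok_def V_def)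
  qed
  have isrun: "is_run (m_inputs M) A (comp_tree M) R"
    unfolding is_run_def
  proof (intro conjI allI impI ballI)
    show "[] \<in> R" by (simp add: R_def)
  next
    fix x y assume "x @ [y] \<in> R" then show "x \<in> R" using Rsnoc by blast
  next
    fix x assume xR: "x \<in> R"
    have ix: "fst (pos x) \<in> a_states A" "snd (pos x) \<in> m_states M" "rch (fst (pos x)) (snd (pos x))"
      using inv[OF xR] by auto
    have ch: "{y. x @ [y] \<in> R} = {a. ok x a}" using Rsnoc xR by blast
    have at: "pbf_atoms (a_delta A (fst (pos x)) (m_out M (snd (pos x)))) \<subseteq> Pow (m_inputs M) \<times> a_states A"
      using hs(3)[OF ix(1) msf(3)[OF ix(2)]] .
    show "{y. x @ [y] \<in> R} \<subseteq> Pow (m_inputs M) \<times> a_states A"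
      unfolding ch using at by (auto simp: ok_def)
    have rs: "run_state A x = fst (pos x)" and ct: "comp_tree M (run_node x) = m_out M (snd (pos x))"
      by (simp_all add: pos_def comp_tree_def)
    have "pbf_eval (V (fst (pos x)) (snd (pos x))) (a_delta A (fst (pos x)) (m_out M (snd (pos x))))"
      using rc1[OF ix] .
    then have "pbf_eval (ok x) (a_delta A (fst (pos x)) (m_out M (snd (pos x))))"
    proof -
      have eq: "ok x = (\<lambda>a. a \<in> pbf_atoms (a_delta A (fst (pos x)) (m_out M (snd (pos x)))) \<and>
          V (fst (pos x)) (snd (pos x)) a)" by (rule ext) (simp add: ok_def)
      show ?thesis unfolding eq using \<open>pbf_eval (V (fst (pos x)) (snd (pos x))) _\<close>
        by (subst pbf_eval_atoms[OF order.refl, symmetric])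
    qed
    then show "pbf_sat {y. x @ [y] \<in> R} (a_delta A (run_state A x) (comp_tree M (run_node x)))"
      unfolding rs ct pbf_sat_def ch by simp
  qed
  have acc: "hesitant_accepting A (\<lambda>m. if m = 0 then a_init A else snd (\<beta> (m - 1)))"
    if bR: "\<forall>k. map \<beta> [0..<k] \<in> R" for \<beta>
  proof -
    define q where "q m = fst (pos (map \<beta> [0..<m]))" for m
    define t where "t m = snd (pos (map \<beta> [0..<m]))" for m
    define r where "r m = \<rho> (q m) (t m)" for m
    have pi: "(\<lambda>m. if m = 0 then a_init A else snd (\<beta> (m - 1))) = q"
      by (rule ext) (simp add: q_def pos_def run_state_map)
    have sn: "map \<beta> [0..<Suc m] = map \<beta> [0..<m] @ [\<beta> m]" for m by simp
    have okm: "ok (map \<beta> [0..<m]) (\<beta> m)" for m using bR[rule_format, of "Suc m"] Rsnoc[of "map \<beta> [0..<m]" "\<beta> m"] by (simp only: sn)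
    have qS: "q m \<in> a_states A" and tS: "t m \<in> m_states M" for m
      using inv[OF bR[rule_format, of m]] by (auto simp: q_def t_def)
    have qsuc: "q (Suc m) = snd (\<beta> m)" for m by (simp only: q_def sn pos_snoc) simp
    have tsuc: "t (Suc m) = m_trans M (t m) (fst (\<beta> m))" for m by (simp only: t_def sn pos_snoc) (simp add: t_def)
    have atm: "\<beta> m \<in> pbf_atoms (a_delta A (q m) (m_out M (t m)))" for m
      using okm[of m] by (simp add: ok_def q_def t_def)
    have rcm: "rank_cmp A (q m) (q (Suc m)) (r m) (r (Suc m))" for m
      using okm[of m] unfolding r_def qsuc tsuc by (simp add: ok_def V_def q_def t_def)
    define b where "b m = (SOME B. B \<in> ?BL \<and> q m \<in> B)" for m
    have bm: "b m \<in> ?BL \<and> q m \<in> b m" for m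
      unfolding b_def using blk_ex[OF h qS[of m]] by (rule someI2_bex) blast
    have hcl: "\<forall>B \<in> ?BL. \<forall>q \<in> B. \<forall>a. a \<subseteq> m_outputs M \<longrightarrow>
        (\<forall>x \<in> pbf_atoms (a_delta A q a). snd x \<notin> B \<longrightarrow>
           (\<exists>B' \<in> ?BL. snd x \<in> B' \<and> (B', B) \<in> a_order A \<and> B' \<noteq> B))"
      using h by (simp add: hesitant_ata_def)
    have bst: "\<forall>m. b (Suc m) = b m \<or> ((b (Suc m), b m) \<in> a_order A \<and> b (Suc m) \<noteq> b m)"
    proof
      fix m
      show "b (Suc m) = b m \<or> ((b (Suc m), b m) \<in> a_order A \<and> b (Suc m) \<noteq> b m)"
      proof (cases "snd (\<beta> m) \<in> b m")
        case True
        then have "q (Suc m) \<in> b m" using qsuc[of m] by simp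
        then have "b (Suc m) = b m"
          using blk_unique[OF h conjunct1[OF bm[of "Suc m"]] conjunct1[OF bm[of m]] conjunct2[OF bm[of "Suc m"]]] by blast
        then show ?thesis by blast
      next
        case False
        then obtain B' where B': "B' \<in> ?BL" "snd (\<beta> m) \<in> B'" "(B', b m) \<in> a_order A" "B' \<noteq> b m"
          using hcl[rule_format, OF conjunct1[OF bm[of m]] conjunct2[OF bm[of m]] msf(3)[OF tS[of m]] atm[of m] False] by blast
        have "q (Suc m) \<in> B'" using B'(2) qsuc[of m] by simp
        then have "b (Suc m) = B'"
          using blk_unique[OF h conjunct1[OF bm[of "Suc m"]] B'(1) conjunct2[OF bm[of "Suc m"]]] by blast
        then show ?thesis using B' by blast
      qed
    qed
    have finBL: "finite ?BL"
    proof -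
      have "partition_on (a_states A) ?BL" using h by (simp add: hesitant_ata_def)
      then have "?BL \<subseteq> Pow (a_states A)" unfolding partition_on_def by blast
      moreover have "finite (Pow (a_states A))" using hs(1) by simp
      ultimately show ?thesis by (rule finite_subset)
    qed
    have po: "partial_order_on ?BL (a_order A)" using h by (simp add: hesitant_ata_def)
    have ball: "\<forall>m. b m \<in> ?BL" using bm by blast
    obtain K where K: "\<forall>m\<ge>K. b m = b K" using eventually_const[OF finBL po ball bst] by blast
    define B where "B = b K"
    have BBL: "B \<in> ?BL" using bm B_def by blast
    have inB: "q m \<in> B" if "m \<ge> K" for m
    proof -
      have "b m = b K" using K that by blast
      then show ?thesis using bm[of m] B_def by simp
    qed
    have dis: "a_Nblocks A \<inter> a_Ublocks A = {}" using h by (simp add: hesitant_ata_def)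
    have cm: "rank_cmp A (q m) (q (Suc m)) (r m) (r (Suc m)) = (if B \<in> a_Nblocks A then (q m \<in> a_acc A \<or> r (Suc m) < r m)
            else (if q m \<in> a_acc A then r (Suc m) < r m else r (Suc m) \<le> r m))" if "m \<ge> K" for m
      using rank_cmp_block[OF h BBL inB[OF that]] inB[of "Suc m"] that by simp
    show ?thesis unfolding pi hesitant_accepting_def
    proof (cases "B \<in> a_Nblocks A")
      case True
      have "infinite {m. q m \<in> a_acc A}"
      proof
        assume "finite {m. q m \<in> a_acc A}"
        then obtain K' where K': "\<forall>m. q m \<in> a_acc A \<longrightarrow> m \<le> K'" by (auto simp: finite_nat_set_iff_bounded_le)
        have st: "r (Suc m) < r m" if "m \<ge> max K (Suc K')" for m
          using cm[of m] rcm[of m] K'[rule_format, of m] that True by auto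
        have dec: "\<forall>m\<ge>max K (Suc K'). r (Suc m) \<le> r m" using st by (simp add: less_imp_le)
        have str: "\<forall>K''. \<exists>m\<ge>K''. r (Suc m) < r m"
        proof
          fix K''
          show "\<exists>m\<ge>K''. r (Suc m) < r m"
            using st[of "max K'' (max K (Suc K'))"] by (intro exI[of _ "max K'' (max K (Suc K'))"]) auto
        qed
        show False using no_inf_descent[OF dec str] .
      qed
      then show "(\<exists>B\<in>a_Ublocks A. (\<exists>k. \<forall>m\<ge>k. q m \<in> B) \<and> finite {m. q m \<in> a_acc A}) \<or>
        (\<exists>B\<in>a_Nblocks A. (\<exists>k. \<forall>m\<ge>k. q m \<in> B) \<and> infinite {m. q m \<in> a_acc A})"
        using True inB by blast
    next
      case False
      then have BU: "B \<in> a_Ublocks A" using BBL by blast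
      have "finite {m. q m \<in> a_acc A}"
      proof (rule ccontr)
        assume "infinite {m. q m \<in> a_acc A}"
        then have inf: "\<forall>K'. \<exists>m\<ge>K'. q m \<in> a_acc A" by (auto simp: infinite_nat_iff_unbounded_le)
        have dec: "\<forall>m\<ge>K. r (Suc m) \<le> r m"
        proof (intro allI impI)
          fix m assume "K \<le> m"
          then have "if q m \<in> a_acc A then r (Suc m) < r m else r (Suc m) \<le> r m"
            using cm[of m] rcm[of m] False by simp
          then show "r (Suc m) \<le> r m" by (auto split: if_splits)
        qed
        have str: "\<forall>K'. \<exists>m\<ge>K'. r (Suc m) < r m"
        proof
          fix K'
          obtain m where "m \<ge> max K K'" "q m \<in> a_acc A" using inf by blast
          then show "\<exists>m\<ge>K'. r (Suc m) < r m" using cm[of m] rcm[of m] False by (intro exI[of _ m]) auto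
        qed
        show False using no_inf_descent[OF dec str] .
      qed
      then show "(\<exists>B\<in>a_Ublocks A. (\<exists>k. \<forall>m\<ge>k. q m \<in> B) \<and> finite {m. q m \<in> a_acc A}) \<or>
        (\<exists>B\<in>a_Nblocks A. (\<exists>k. \<forall>m\<ge>k. q m \<in> B) \<and> infinite {m. q m \<in> a_acc A})"
        using BU inB by blast
    qed
  qed
  show ?thesis unfolding accepts_def using isrun acc by blast
qed

lemma complete:
  fixes M :: "('a, 's) moore" and A :: "('a, 'q) aht"
  assumes ms: "moore_system M" and h: "hesitant_ata (m_inputs M) (m_outputs M) A"
    and ac: "accepts (m_inputs M) A (comp_tree M)"
  shows "\<exists>rch \<rho>. rank_constraint M A rch \<rho>"
proof -
  let ?BL = "a_Nblocks A \<union> a_Ublocks A"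
  obtain R where run: "is_run (m_inputs M) A (comp_tree M) R"
    and acc: "\<And>\<beta>. (\<forall>k. map \<beta> [0..<k] \<in> R) \<Longrightarrow>
              hesitant_accepting A (\<lambda>m. if m = 0 then a_init A else snd (\<beta> (m - 1)))"
    using ac unfolding accepts_def by blast
  define pos where "pos y = (run_state A y, m_run M (m_init M) (run_node y))" for y
  define succ where "succ p a = (snd a, m_trans M (snd p) (fst a))" for p :: "'q \<times> 's" and a :: "'a set \<times> 'q"
  define phi where "phi p = a_delta A (fst p) (m_out M (snd p))" for p :: "'q \<times> 's"
  have pos_snoc: "pos (y @ [a]) = succ (pos y) a" for y a
    by (simp add: pos_def succ_def run_state_def run_node_def)
  have pos_nil: "pos [] = (a_init A, m_init M)" by (simp add: pos_def run_state_def run_node_def)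
  have runD: "[] \<in> R" "\<And>x y. x @ [y] \<in> R \<Longrightarrow> x \<in> R"
    "\<And>x. x \<in> R \<Longrightarrow> {y. x @ [y] \<in> R} \<subseteq> Pow (m_inputs M) \<times> a_states A"
    "\<And>x. x \<in> R \<Longrightarrow> pbf_sat {y. x @ [y] \<in> R} (a_delta A (run_state A x) (comp_tree M (run_node x)))"
    using run unfolding is_run_def by blast+
  have hs: "finite (a_states A)" "a_init A \<in> a_states A" using h by (auto simp: hesitant_ata_def)
  have inv: "fst (pos y) \<in> a_states A \<and> run_node y \<in> lists (Pow (m_inputs M))" if "y \<in> R" for y
    using that
  proof (induction y rule: rev_induct)
    case Nil then show ?case using hs(2) by (simp add: pos_nil run_node_def)
  next
    case (snoc a y)
    then have "y \<in> R" using runD(2) by blast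
    then have "a \<in> Pow (m_inputs M) \<times> a_states A" using runD(3) snoc.prems by blast
    then show ?case using snoc.IH \<open>y \<in> R\<close> by (auto simp: pos_snoc succ_def run_node_def)
  qed
  have posR: "pos y \<in> a_states A \<times> m_states M" if "y \<in> R" for y
  proof -
    have "m_run M (m_init M) (run_node y) \<in> m_states M"
      using m_run_in[OF ms _ conjunct2[OF inv[OF that]]] ms by (simp add: moore_system_def)
    then show ?thesis using inv[OF that] by (simp add: pos_def)
  qed
  have finR: "finite (pos ` R)"
  proof (rule finite_subset)
    show "pos ` R \<subseteq> a_states A \<times> m_states M" using posR by blast
    show "finite (a_states A \<times> m_states M)" using hs(1) ms by (simp add: moore_system_def)
  qed
  have satR: "pbf_eval (\<lambda>a. y @ [a] \<in> R) (phi (pos y))" if "y \<in> R" for y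
  proof -
    have "pbf_sat {a. y @ [a] \<in> R} (a_delta A (run_state A y) (comp_tree M (run_node y)))"
      using runD(4)[OF that] .
    then show ?thesis by (simp add: pbf_sat_def phi_def pos_def comp_tree_def)
  qed
  interpret rt: runtree R pos succ phi
  proof
    fix y a assume "y @ [a] \<in> R" then show "y \<in> R" by (rule runD(2))
  next
    fix y a show "pos (y @ [a]) = succ (pos y) a" by (rule pos_snoc)
  next
    fix y assume "y \<in> R" then show "pbf_eval (\<lambda>a. y @ [a] \<in> R) (phi (pos y))" by (rule satR)
  next
    show "finite (pos ` R)" by (rule finR)
  qed
  have pi: "(\<lambda>m. if m = 0 then a_init A else snd (\<beta> (m - 1))) = (\<lambda>m. fst (pos (map \<beta> [0..<m])))" for \<beta>
    by (rule ext) (simp add: pos_def run_state_map)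
  have dis: "a_Nblocks A \<inter> a_Ublocks A = {}" using h by (simp add: hesitant_ata_def)
  have Nrank: "\<exists>\<rho>::'q \<times> 's \<Rightarrow> nat. \<forall>p\<in>pos ` R. p \<in> {p. fst p \<in> B} \<longrightarrow> p \<notin> {p. fst p \<in> a_acc A} \<longrightarrow>
     pbf_eval (\<lambda>a. succ p a \<in> pos ` R \<and> (succ p a \<in> {p. fst p \<in> B} \<longrightarrow> \<rho> (succ p a) < \<rho> p)) (phi p)"
    if B: "B \<in> a_Nblocks A" for B
  proof (rule rt.buchi_rank, rule notI, elim exE conjE)
    fix \<beta> K assume bR: "\<forall>k. map \<beta> [0..<k] \<in> R"
      and ev: "\<forall>k\<ge>K. pos (map \<beta> [0..<k]) \<in> {p. fst p \<in> B} - {p. fst p \<in> a_acc A}"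
    define q where "q m = fst (pos (map \<beta> [0..<m]))" for m
    have ha: "hesitant_accepting A q" using acc[OF bR] unfolding pi q_def .
    have inB: "\<forall>m\<ge>K. q m \<in> B" and nacc: "\<forall>m\<ge>K. q m \<notin> a_acc A" using ev by (auto simp: q_def)
    have fin: "finite {m. q m \<in> a_acc A}"
    proof (rule finite_subset)
      show "{m. q m \<in> a_acc A} \<subseteq> {..<K}" using nacc by (auto simp: not_less[symmetric])
    qed simp
    show False using ha unfolding hesitant_accepting_def
    proof (elim disjE bexE conjE exE)
      fix B' k assume B': "B' \<in> a_Ublocks A" "\<forall>m\<ge>k. q m \<in> B'"
      have "q (max k K) \<in> B'" "q (max k K) \<in> B" using B'(2) inB by auto
      then have "B' = B" using blk_unique[OF h, of B' B] B'(1) B by blast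
      then show False using B B'(1) dis by blast
    next
      fix B' k assume "infinite {m. q m \<in> a_acc A}"
      then show False using fin by blast
    qed
  qed
  have Urank: "\<exists>\<rho>::'q \<times> 's \<Rightarrow> nat. \<forall>p\<in>pos ` R. p \<in> {p. fst p \<in> B} \<longrightarrow>
     pbf_eval (\<lambda>a. succ p a \<in> pos ` R \<and> (succ p a \<in> {p. fst p \<in> B} \<longrightarrow>
         (if p \<in> {p. fst p \<in> a_acc A} then \<rho> (succ p a) < \<rho> p else \<rho> (succ p a) \<le> \<rho> p))) (phi p)"
    if B: "B \<in> a_Ublocks A" for B
  proof (rule rt.cobuchi_rank, rule notI, elim exE conjE)
    fix \<beta> K assume bR: "\<forall>k. map \<beta> [0..<k] \<in> R"
      and ev: "\<forall>k\<ge>K. pos (map \<beta> [0..<k]) \<in> {p. fst p \<in> B}"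
      and io: "\<forall>K'. \<exists>k\<ge>K'. pos (map \<beta> [0..<k]) \<in> {p. fst p \<in> a_acc A}"
    define q where "q m = fst (pos (map \<beta> [0..<m]))" for m
    have ha: "hesitant_accepting A q" using acc[OF bR] unfolding pi q_def .
    have inB: "\<forall>m\<ge>K. q m \<in> B" using ev by (auto simp: q_def)
    have inf: "infinite {m. q m \<in> a_acc A}"
      unfolding infinite_nat_iff_unbounded_le using io by (auto simp: q_def)
    show False using ha unfolding hesitant_accepting_def
    proof (elim disjE bexE conjE exE)
      fix B' k assume "finite {m. q m \<in> a_acc A}"
      then show False using inf by blast
    next
      fix B' k assume B': "B' \<in> a_Nblocks A" "\<forall>m\<ge>k. q m \<in> B'"
      have "q (max k K) \<in> B'" "q (max k K) \<in> B" using B'(2) inB by auto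
      then have "B' = B" using blk_unique[OF h, of B' B] B'(1) B by blast
      then show False using B B'(1) dis by blast
    qed
  qed
  define PN where "PN B \<rho> = (\<forall>p\<in>pos ` R. p \<in> {p. fst p \<in> B} \<longrightarrow> p \<notin> {p. fst p \<in> a_acc A} \<longrightarrow>
     pbf_eval (\<lambda>a. succ p a \<in> pos ` R \<and> (succ p a \<in> {p. fst p \<in> B} \<longrightarrow> \<rho> (succ p a) < \<rho> p)) (phi p))" for B and \<rho> :: "'q \<times> 's \<Rightarrow> nat"
  define fN where "fN B = (SOME \<rho>. PN B \<rho>)" for B
  have fN: "\<forall>p\<in>pos ` R. p \<in> {p. fst p \<in> B} \<longrightarrow> p \<notin> {p. fst p \<in> a_acc A} \<longrightarrow>
     pbf_eval (\<lambda>a. succ p a \<in> pos ` R \<and> (succ p a \<in> {p. fst p \<in> B} \<longrightarrow> fN B (succ p a) < fN B p)) (phi p)"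
    if "B \<in> a_Nblocks A" for B
  proof -
    have "PN B (fN B)" unfolding fN_def by (rule someI_ex[of "PN B"]) (use Nrank[OF that] in \<open>simp add: PN_def\<close>)
    then show ?thesis by (simp add: PN_def)
  qed
  define PU where "PU B \<rho> = (\<forall>p\<in>pos ` R. p \<in> {p. fst p \<in> B} \<longrightarrow>
     pbf_eval (\<lambda>a. succ p a \<in> pos ` R \<and> (succ p a \<in> {p. fst p \<in> B} \<longrightarrow>
         (if p \<in> {p. fst p \<in> a_acc A} then \<rho> (succ p a) < \<rho> p else \<rho> (succ p a) \<le> \<rho> p))) (phi p))" for B and \<rho> :: "'q \<times> 's \<Rightarrow> nat"
  define fU where "fU B = (SOME \<rho>. PU B \<rho>)" for B
  have fU: "\<forall>p\<in>pos ` R. p \<in> {p. fst p \<in> B} \<longrightarrow>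
     pbf_eval (\<lambda>a. succ p a \<in> pos ` R \<and> (succ p a \<in> {p. fst p \<in> B} \<longrightarrow>
         (if p \<in> {p. fst p \<in> a_acc A} then fU B (succ p a) < fU B p else fU B (succ p a) \<le> fU B p))) (phi p)"
    if "B \<in> a_Ublocks A" for B
  proof -
    have "PU B (fU B)" unfolding fU_def by (rule someI_ex[of "PU B"]) (use Urank[OF that] in \<open>simp add: PU_def\<close>)
    then show ?thesis by (simp add: PU_def)
  qed
  define blk where "blk q = (SOME B. B \<in> ?BL \<and> q \<in> B)" for q
  have blk: "blk q \<in> ?BL \<and> q \<in> blk q" if "q \<in> a_states A" for q
    unfolding blk_def using blk_ex[OF h that] by (rule someI2_bex) blast
  have blk_eq: "blk q = B" if "B \<in> ?BL" "q \<in> B" for q B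
  proof -
    have "q \<in> a_states A" using h that unfolding hesitant_ata_def partition_on_def by blast
    then show ?thesis using blk_unique[OF h conjunct1[OF blk] that(1) conjunct2[OF blk] that(2)] by blast
  qed
  define \<rho> where "\<rho> q t = (if blk q \<in> a_Nblocks A then fN (blk q) (q, t) else fU (blk q) (q, t))" for q t
  define rch where "rch q t = ((q, t) \<in> pos ` R)" for q t
  have "rank_constraint M A rch \<rho>"
    unfolding rank_constraint_def
  proof (intro conjI ballI impI)
    show "rch (a_init A) (m_init M)" unfolding rch_def using runD(1) pos_nil by force
  next
    fix q t assume qS: "q \<in> a_states A" and tS: "t \<in> m_states M" and r: "rch q t"
    define p where "p = (q, t)"
    have pR: "p \<in> pos ` R" using r by (simp add: rch_def p_def)
    then obtain x where x: "x \<in> R" "pos x = p" by blast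
    define B where "B = blk q"
    have B: "B \<in> ?BL" "q \<in> B" using blk[OF qS] by (simp_all add: B_def)
    have ph: "phi p = a_delta A q (m_out M t)" by (simp add: phi_def p_def)
    have sp: "succ p a = (snd a, m_trans M t (fst a))" for a by (simp add: succ_def p_def)
    have lam: "(\<lambda>(d, q'). rch q' (m_trans M t d) \<and> rank_cmp A q q' (\<rho> q t) (\<rho> q' (m_trans M t d)))
        = (\<lambda>a. succ p a \<in> pos ` R \<and> rank_cmp A q (snd a) (\<rho> q t) (\<rho> (snd a) (m_trans M t (fst a))))"
      by (rule ext) (auto simp: rch_def sp)
    have rcb: "rank_cmp A q q' r r' = (if q' \<in> B then (if B \<in> a_Nblocks A then (q \<in> a_acc A \<or> r' < r)
            else (if q \<in> a_acc A then r' < r else r' \<le> r)) else True)" for q' r r'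
      using rank_cmp_block[OF h B] .
    have base: "pbf_eval (\<lambda>a. succ p a \<in> pos ` R) (phi p)"
    proof -
      have "pbf_eval (\<lambda>a. x @ [a] \<in> R) (phi p)" using satR[OF x(1)] x(2) by simp
      then show ?thesis
      proof (rule pbf_eval_mono)
        fix a assume "x @ [a] \<in> R"
        then have "pos (x @ [a]) \<in> pos ` R" by blast
        then show "succ p a \<in> pos ` R" using pos_snoc[of x a] x(2) by simp
      qed
    qed
    show "pbf_eval (\<lambda>(d, q'). rch q' (m_trans M t d) \<and> rank_cmp A q q' (\<rho> q t) (\<rho> q' (m_trans M t d)))
          (a_delta A q (m_out M t))"
      unfolding lam ph[symmetric]
    proof (cases "B \<in> a_Nblocks A")
      case BN: True
      have rq: "\<rho> q t = fN B p" using BN by (simp add: \<rho>_def B_def p_def)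
      have rq': "\<rho> q' t' = fN B (q', t')" if "q' \<in> B" for q' t'
        using BN blk_eq[OF B(1) that] by (simp add: \<rho>_def)
      show "pbf_eval (\<lambda>a. succ p a \<in> pos ` R \<and> rank_cmp A q (snd a) (\<rho> q t) (\<rho> (snd a) (m_trans M t (fst a)))) (phi p)"
      proof (cases "q \<in> a_acc A")
        case True
        show ?thesis using base
        proof (rule pbf_eval_mono)
          fix a assume "succ p a \<in> pos ` R"
          then show "succ p a \<in> pos ` R \<and> rank_cmp A q (snd a) (\<rho> q t) (\<rho> (snd a) (m_trans M t (fst a)))"
            using rcb True BN by simp
        qed
      next
        case False
        have "pbf_eval (\<lambda>a. succ p a \<in> pos ` R \<and> (succ p a \<in> {p. fst p \<in> B} \<longrightarrow> fN B (succ p a) < fN B p)) (phi p)"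
          using fN[OF BN, rule_format, OF pR] B(2) False by (simp add: p_def)
        then show ?thesis
        proof (rule pbf_eval_mono)
          fix a assume a: "succ p a \<in> pos ` R \<and> (succ p a \<in> {p. fst p \<in> B} \<longrightarrow> fN B (succ p a) < fN B p)"
          show "succ p a \<in> pos ` R \<and> rank_cmp A q (snd a) (\<rho> q t) (\<rho> (snd a) (m_trans M t (fst a)))"
          proof (cases "snd a \<in> B")
            case True
            then show ?thesis using a rcb BN rq rq'[OF True] by (simp add: sp)
          next
            case False
            then show ?thesis using a rcb by simp
          qed
        qed
      qed
    next
      case BNN: False
      then have BU: "B \<in> a_Ublocks A" using B(1) by blast
      have rq: "\<rho> q t = fU B p" using BNN by (simp add: \<rho>_def B_def p_def)
      have rq': "\<rho> q' t' = fU B (q', t')" if "q' \<in> B" for q' t'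
        using BNN blk_eq[OF B(1) that] by (simp add: \<rho>_def)
      have "pbf_eval (\<lambda>a. succ p a \<in> pos ` R \<and> (succ p a \<in> {p. fst p \<in> B} \<longrightarrow>
         (if p \<in> {p. fst p \<in> a_acc A} then fU B (succ p a) < fU B p else fU B (succ p a) \<le> fU B p))) (phi p)"
        using fU[OF BU, rule_format, OF pR] B(2) by (simp add: p_def)
      then show "pbf_eval (\<lambda>a. succ p a \<in> pos ` R \<and> rank_cmp A q (snd a) (\<rho> q t) (\<rho> (snd a) (m_trans M t (fst a)))) (phi p)"
      proof (rule pbf_eval_mono)
        fix a assume a: "succ p a \<in> pos ` R \<and> (succ p a \<in> {p. fst p \<in> B} \<longrightarrow>
         (if p \<in> {p. fst p \<in> a_acc A} then fU B (succ p a) < fU B p else fU B (succ p a) \<le> fU B p))"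
        show "succ p a \<in> pos ` R \<and> rank_cmp A q (snd a) (\<rho> q t) (\<rho> (snd a) (m_trans M t (fst a)))"
        proof (cases "snd a \<in> B")
          case True
          then show ?thesis using a rcb BNN rq rq'[OF True] by (cases "q \<in> a_acc A") (simp_all add: succ_def p_def)
        next
          case False
          then show ?thesis using a rcb by simp
        qed
      qed
    qed
  qed
  then show ?thesis by blast
qed

theorem mainTheorem4:
  fixes M :: "('a, 's) moore" and \<Phi> :: "'a sform" and A :: "('a, 'q) aht"
  assumes "moore_system M"
    and "wf_sform (m_inputs M) (m_outputs M) \<Phi>"
    and "hesitant_ata (m_inputs M) (m_outputs M) A"
    and "\<forall>l. (\<forall>w \<in> lists (Pow (m_inputs M)). l w \<subseteq> m_outputs M) \<longrightarrow>
              (accepts (m_inputs M) A l \<longleftrightarrow> tree_sat (m_inputs M) l \<Phi>)"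
  shows "moore_models M \<Phi> \<longleftrightarrow> (\<exists>rch \<rho>. rank_constraint M A rch \<rho>)"
proof -
  have "\<forall>w \<in> lists (Pow (m_inputs M)). comp_tree M w \<subseteq> m_outputs M"
    using comp_tree_sub[OF assms(1)] by blast
  then have "accepts (m_inputs M) A (comp_tree M) \<longleftrightarrow> moore_models M \<Phi>"
    using assms(4) by (simp add: moore_models_def)
  then show ?thesis using sound[OF assms(1,3)] complete[OF assms(1,3)] by blast
qed

end
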